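(* Let $\mathcal{L}=(L,\wedge,\vee,0,1)$ be a complete lattice and let $C\subseteq L$ be a chain consisting of strongly irreducible elements of $L$. Then $\bigwedge C$ is strongly irreducible in $L$.
   Context: An element $p$ of a lattice is strongly irreducible if for all $a,b\in L$: $a\wedge b\leq p$ implies $a\leq p$ or $b\leq p$. *)

theory Defs
  imports Main
begin

definition strongly_irreducible :: "'a::lattice \<Rightarrow> bool" where
  "strongly_irreducible p \<longleftrightarrow> (\<forall>a b. inf a b \<le> p \<longrightarrow> a \<le> p \<or> b \<le> p)"

end

theory Submission
  imports Defs
begin

theorem proposition1p13:
  fixes C :: "'a::complete_lattice set"
  assumes "Complete_Partial_Order.chain (\<le>) C"
    and "\<forall>c\<in>C. strongly_irreducible c"
  shows "strongly_irreducible (Inf C)"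
  unfolding strongly_irreducible_def
proof (intro allI impI, rule ccontr)
  fix a b :: 'a
  assume h: "inf a b \<le> Inf C" and n: "\<not> (a \<le> Inf C \<or> b \<le> Inf C)"
  then obtain c1 where c1: "c1 \<in> C" "\<not> a \<le> c1" by (meson le_Inf_iff)
  from n obtain c2 where c2: "c2 \<in> C" "\<not> b \<le> c2" by (meson le_Inf_iff)
  have i1: "inf a b \<le> c1" using h c1 by (meson Inf_lower order_trans)
  have i2: "inf a b \<le> c2" using h c2 by (meson Inf_lower order_trans)
  have s1: "a \<le> c1 \<or> b \<le> c1" using i1 assms(2) c1 unfolding strongly_irreducible_def by blast
  have s2: "a \<le> c2 \<or> b \<le> c2" using i2 assms(2) c2 unfolding strongly_irreducible_def by blast
  from assms(1) c1 c2 have "c1 \<le> c2 \<or> c2 \<le> c1" by (simp add: chain_def)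
  then show False using s1 s2 c1 c2 order_trans by metis
qed

end
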